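(* Let $(\mathcal{P},\Sigma,\mu)$ be a measure space with $\mathcal{P}\subseteq\mathbb{C}^{n_p}$, such that $\overline{\mathsf{p}}\in\mathcal{P}$ for all $\mathsf{p}\in\mathcal{P}$, $\overline{S}\in\Sigma$ for all $S\in\Sigma$, and $\mu(\overline{S})=\mu(S)$ for all $S\in\Sigma$. Let $q_A,q_B,q_C,r,n_f,n_o$ be positive integers and let $\hat\alpha_i,\hat\beta_j,\hat\gamma_k:\mathcal{P}\to\mathbb{C}$ ($i=1,\dots,q_A$, $j=1,\dots,q_B$, $k=1,\dots,q_C$) be measurable functions satisfying $f(\overline{\mathsf{p}})=\overline{f(\mathsf{p})}$ for all $\mathsf{p}\in\mathcal{P}$ (for each such function $f$), and \[ \int_{\mathcal{P}}\left(\frac{\sum_{j=1}^{q_B}|\hat\beta_j(\mathsf{p})|\,\sum_{k=1}^{q_C}|\hat\gamma_k(\mathsf{p})|}{\sum_{i=1}^{q_A}|\hat\alpha_i(\mathsf{p})|}\right)^{2}\,d\mu(\mathsf{p})<\infty . \] Let $R=(\mathbb{R}^{r\times r})^{q_A}\times(\mathbb{R}^{r\times n_f})^{q_B}\times(\mathbb{R}^{n_o\times r})^{q_C}$, and for a tuple $(\hat A_i,\hat B_j,\hat C_k)\in R$ set $\hat{\mathcal{A}}(\mathsf{p})=\sum_{i=1}^{q_A}\hat\alpha_i(\mathsf{p})\hat A_i$, $\hat{\mathcal{B}}(\mathsf{p})=\sum_{j=1}^{q_B}\hat\beta_j(\mathsf{p})\hat B_j$, $\hat{\mathcal{C}}(\mathsf{p})=\sum_{k=1}^{q_C}\hat\gamma_k(\mathsf{p})\hat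 C_k$. Define \[ \mathcal{R}=\Big\{(\hat A_i,\hat B_j,\hat C_k)\in R:\ \operatorname*{ess\,sup}_{\mathsf{p}\in\mathcal{P}}\big\|\hat\alpha_i(\mathsf{p})\hat{\mathcal{A}}(\mathsf{p})^{-1}\big\|_F<\infty,\ i=1,\dots,q_A\Big\}. \] Then $\mathcal{R}$ is an open subset of $R$. Moreover, for every $(\hat A_i,\hat B_j,\hat C_k)\in\mathcal{R}$, the function $\hat y(\mathsf{p})=\hat{\mathcal{C}}(\mathsf{p})\hat{\mathcal{A}}(\mathsf{p})^{-1}\hat{\mathcal{B}}(\mathsf{p})$ is square-integrable, i.e. $\int_{\mathcal{P}}\|\hat y(\mathsf{p})\|_F^2\,d\mu(\mathsf{p})<\infty$.
   Context: $\|\cdot\|_F$ is the Frobenius norm; $R$ is regarded as a finite-dimensional real vector space with its usual topology. The essential supremum is with respect to $\mu$ (the condition in the definition of $\mathcal{R}$ includes that $\hat{\mathcal{A}}(\mathsf{p})$ is invertible for $\mu$-almost every $\mathsf{p}$). *)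

theory Defs
  imports "HOL-Analysis.Analysis"
begin

definition conjv :: "complex^'n \<Rightarrow> complex^'n" where
  "conjv p = (\<chi> i. cnj (p $ i))"

definition ess_sup :: "'a measure \<Rightarrow> ('a \<Rightarrow> ereal) \<Rightarrow> ereal" where
  "ess_sup M f = Inf {c. AE x in M. f x \<le> c}"

definition pcomb :: "('q::finite \<Rightarrow> 'p \<Rightarrow> complex) \<Rightarrow> real^'m^'n^'q \<Rightarrow> 'p \<Rightarrow> complex^'m^'n" where
  "pcomb a X p = (\<chi> u v. \<Sum>i\<in>UNIV. a i p * complex_of_real (X $ i $ u $ v))"

definition frob :: "complex^'m^'n \<Rightarrow> real" where
  "frob X = sqrt (\<Sum>u\<in>UNIV. \<Sum>v\<in>UNIV. (cmod (X $ u $ v))\<^sup>2)"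

end

theory Submission
  imports Defs
begin

lemma nsq: "(norm (x::'a::real_normed_vector^'n))^2 = (\<Sum>i\<in>UNIV. (norm (x$i))^2)"
  unfolding norm_vec_def L2_set_def by (simp add: sum_nonneg)

lemma nsq2: "(norm (X::'a::real_normed_vector^'m^'n))^2 = (\<Sum>u\<in>UNIV. \<Sum>v\<in>UNIV. (norm (X$u$v))^2)"
  by (simp add: nsq)

lemma frob_norm: "frob X = norm X"
  unfolding frob_def by (metis nsq2 norm_ge_zero real_sqrt_unique)

lemma cs_c: "(cmod (\<Sum>k\<in>UNIV. a k * b k))^2 \<le> (\<Sum>k\<in>UNIV. (cmod (a k))^2) * (\<Sum>k\<in>UNIV. (cmod (b k))^2)"
proof -
  have "cmod (\<Sum>k\<in>UNIV. a k * b k) \<le> (\<Sum>k\<in>UNIV. cmod (a k) * cmod (b k))"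
    by (metis (no_types, lifting) norm_mult norm_sum sum.cong)
  hence "(cmod (\<Sum>k\<in>UNIV. a k * b k))^2 \<le> (\<Sum>k\<in>UNIV. cmod (a k) * cmod (b k))^2"
    by (simp add: power_mono)
  also have "\<dots> \<le> (\<Sum>k\<in>UNIV. (cmod (a k))^2) * (\<Sum>k\<in>UNIV. (cmod (b k))^2)"
    by (rule Cauchy_Schwarz_ineq_sum)
  finally show ?thesis .
qed

lemma norm_mm: "norm ((A::complex^'k^'n) ** (B::complex^'m^'k)) \<le> norm A * norm B"
proof -
  have "(norm (A ** B))^2 = (\<Sum>u\<in>UNIV. \<Sum>v\<in>UNIV. (cmod (\<Sum>k\<in>UNIV. A$u$k * B$k$v))^2)"
    unfolding nsq2 by (simp add: matrix_matrix_mult_def)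
  also have "\<dots> \<le> (\<Sum>u\<in>UNIV. \<Sum>v\<in>UNIV. (\<Sum>k\<in>UNIV. (cmod (A$u$k))^2) * (\<Sum>k\<in>UNIV. (cmod (B$k$v))^2))"
    by (intro sum_mono cs_c)
  also have "\<dots> = (\<Sum>u\<in>UNIV. \<Sum>k\<in>UNIV. (cmod (A$u$k))^2) * (\<Sum>v\<in>UNIV. \<Sum>k\<in>UNIV. (cmod (B$k$v))^2)"
    by (simp add: sum_product)
  also have "\<dots> = (norm A * norm B)^2"
    unfolding power_mult_distrib nsq2
    by (subst sum.swap[of _ UNIV UNIV]) (rule refl)
  finally show ?thesis
    by (meson mult_nonneg_nonneg norm_ge_zero power2_le_imp_le)
qed

lemma norm_mv: "norm ((A::complex^'k^'n) *v (x::complex^'k)) \<le> norm A * norm x"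
proof -
  have "(norm (A *v x))^2 = (\<Sum>u\<in>UNIV. (cmod (\<Sum>k\<in>UNIV. A$u$k * x$k))^2)"
    unfolding nsq by (simp add: matrix_vector_mult_def)
  also have "\<dots> \<le> (\<Sum>u\<in>UNIV. (\<Sum>k\<in>UNIV. (cmod (A$u$k))^2) * (\<Sum>k\<in>UNIV. (cmod (x$k))^2))"
    by (intro sum_mono cs_c)
  also have "\<dots> = (norm A * norm x)^2"
    unfolding power_mult_distrib nsq2 nsq by (simp add: sum_distrib_right)
  finally show ?thesis
    by (meson mult_nonneg_nonneg norm_ge_zero power2_le_imp_le)
qed

lemma mat_mul_entry: "(mat c ** (X::complex^'m^'n)) $ u $ v = c * X$u$v"
  by (simp add: matrix_matrix_mult_def mat_def if_distrib if_distribR sum.delta' cong: if_cong)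

lemma mat_mul_right: "((X::complex^'m^'n) ** mat c) $ u $ v = X$u$v * c"
  by (simp add: matrix_matrix_mult_def mat_def if_distrib if_distribR sum.delta' cong: if_cong)

lemma mat_comm: "mat c ** (X::complex^'m^'n) = X ** mat c"
  by (simp add: vec_eq_iff mat_mul_entry mat_mul_right mult.commute)

lemma norm_mat_mul: "norm (mat c ** (X::complex^'m^'n)) = cmod c * norm X"
proof -
  have "(norm (mat c ** X))^2 = (cmod c * norm X)^2"
    unfolding nsq2 power_mult_distrib mat_mul_entry norm_mult by (simp add: sum_distrib_left)
  thus ?thesis by (simp add: power2_eq_iff_nonneg)
qed

lemma inv_ker: "invertible (A::complex^'n^'n) \<longleftrightarrow> (\<forall>x. A *v x = 0 \<longrightarrow> x = 0)"
  by (simp add: invertible_left_inverse matrix_left_invertible_ker)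

lemma minv: "invertible (A::complex^'n^'n) \<Longrightarrow> A ** matrix_inv A = mat 1 \<and> matrix_inv A ** A = mat 1"
  unfolding invertible_def matrix_inv_def by (rule someI_ex)

definition cm :: "real^'m^'n \<Rightarrow> complex^'m^'n" where
  "cm X = (\<chi> u v. complex_of_real (X$u$v))"

lemma norm_cm: "norm (cm X) = norm X"
proof -
  have "(norm (cm X))^2 = (norm X)^2" unfolding nsq2 cm_def by simp
  thus ?thesis by (simp add: power2_eq_iff_nonneg)
qed

lemma pcomb_sum: "pcomb a X p = (\<Sum>i\<in>UNIV. mat (a i p) ** cm (X$i))"
  by (simp add: vec_eq_iff pcomb_def sum_component mat_mul_entry cm_def)

lemma nth_le: "norm (x $ i) \<le> norm x"
  unfolding norm_vec_def by (rule member_le_L2_set) simp_all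

lemma pcomb_add: "pcomb a (X + Y) p = pcomb a X p + pcomb a Y p"
  by (simp add: vec_eq_iff pcomb_def sum.distrib[symmetric] algebra_simps)

lemma norm_pcomb: "norm (pcomb a X p) \<le> (\<Sum>i\<in>UNIV. cmod (a i p)) * norm X"
proof -
  have "norm (pcomb a X p) \<le> (\<Sum>i\<in>UNIV. norm (mat (a i p) ** cm (X$i)))"
    unfolding pcomb_sum by (rule norm_sum)
  also have "\<dots> \<le> (\<Sum>i\<in>UNIV. cmod (a i p) * norm X)"
    unfolding norm_mat_mul norm_cm by (intro sum_mono mult_left_mono nth_le) auto
  finally show ?thesis by (simp add: sum_distrib_right)
qed

lemma mm_radd: "((A::'a::semiring_1^'k^'n) + B) ** C = A ** C + B ** C"
  by (vector matrix_matrix_mult_def sum.distrib[symmetric] field_simps)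

lemma mm_sum: "(A::'a::semiring_1^'k^'n) ** (\<Sum>i\<in>S. f i) = (\<Sum>i\<in>S. A ** f i)"
  by (induction S rule: infinite_finite_induct) (auto simp: matrix_add_ldistrib)

lemma not_inv0: "\<not> invertible (0::complex^'n^'n)"
proof
  assume "invertible (0::complex^'n^'n)"
  then obtain B :: "complex^'n^'n" where "0 ** B = mat 1" unfolding invertible_def by blast
  hence "(0::complex^'n^'n) = mat 1" by simp
  hence e: "mat 1 = (0::complex^'n^'n)" by simp
  fix u :: 'n
  have "mat 1 $ u $ u = (0::complex^'n^'n) $ u $ u" by (simp only: e)
  moreover have "mat 1 $ u $ u = (1::complex)" by (simp add: mat_def)
  ultimately show False by simp
qed

lemma pointwise_open:
  fixes A :: "complex^'r^'r" and a :: "'q::finite \<Rightarrow> complex" and E :: "real^'r^'r^'q"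
  assumes inv: "invertible A"
    and bnd: "\<And>i. norm (mat (a i) ** matrix_inv A) \<le> K"
    and small: "real CARD('q) * K * norm E \<le> 1/2"
  defines "A' \<equiv> A + (\<Sum>i\<in>UNIV. mat (a i) ** cm (E$i))"
  shows "invertible A' \<and> (\<forall>i. norm (mat (a i) ** matrix_inv A') \<le> 2 * K)"
proof -
  define Ai where "Ai = matrix_inv A"
  have AAi: "Ai ** A = mat 1" "A ** Ai = mat 1" using minv[OF inv] by (auto simp: Ai_def)
  define X where "X = Ai ** (\<Sum>i\<in>UNIV. mat (a i) ** cm (E$i))"
  have "norm X \<le> (\<Sum>i\<in>UNIV. norm (Ai ** (mat (a i) ** cm (E$i))))"
    unfolding X_def mm_sum by (rule norm_sum)
  also have "\<dots> \<le> (\<Sum>i\<in>(UNIV::'q set). K * norm E)"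
  proof -
    have "norm (Ai ** (mat (a i) ** cm (E$i))) \<le> K * norm E" for i
    proof -
    have "Ai ** (mat (a i) ** cm (E$i)) = (mat (a i) ** Ai) ** cm (E$i)"
      using mat_comm[of "a i" Ai] matrix_mul_assoc[of Ai "mat (a i)" "cm (E$i)"] by metis
    hence "norm (Ai ** (mat (a i) ** cm (E$i))) \<le> norm (mat (a i) ** Ai) * norm (cm (E$i))"
      using norm_mm by metis
    also have "\<dots> \<le> K * norm E"
      using bnd[of i] unfolding norm_cm Ai_def
      by (meson mult_mono norm_ge_zero nth_le order.trans)
    finally show "norm (Ai ** (mat (a i) ** cm (E$i))) \<le> K * norm E" .
    qed
    thus ?thesis by (intro sum_mono)
  qed
  also have "\<dots> = real CARD('q) * K * norm E" by simp
  finally have nX: "norm X \<le> 1/2" using small by linarith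
  have AiA': "Ai ** A' = mat 1 + X" unfolding A'_def X_def by (simp add: matrix_add_ldistrib AAi)
  have invA': "invertible A'"
    unfolding inv_ker
  proof (intro allI impI)
    fix x assume "A' *v x = 0"
    hence "(Ai ** A') *v x = 0" by (metis matrix_vector_mul_assoc matrix_vector_mult_0_right)
    hence "x + X *v x = 0" by (simp add: AiA' matrix_vector_mult_add_rdistrib)
    hence "x = - (X *v x)" by (simp add: eq_neg_iff_add_eq_0)
    hence "norm x = norm (X *v x)" by (metis norm_minus_cancel)
    also have "\<dots> \<le> norm X * norm x" by (rule norm_mv)
    also have "\<dots> \<le> 1/2 * norm x" by (rule mult_right_mono[OF nX norm_ge_zero])
    finally show "x = 0" by simp
  qed
  have "norm (mat (a i) ** matrix_inv A') \<le> 2 * K" for i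
  proof -
    define N where "N = mat (a i) ** matrix_inv A'"
    have A'N: "A' ** matrix_inv A' = mat 1" using minv[OF invA'] by auto
    have "(mat 1 + X) ** N = (Ai ** A') ** (matrix_inv A' ** mat (a i))"
      unfolding N_def AiA' by (simp add: mat_comm)
    also have "\<dots> = mat (a i) ** Ai"
      by (metis A'N matrix_mul_assoc matrix_mul_lid mat_comm)
    finally have "N + X ** N = mat (a i) ** Ai"
      by (simp add: mm_radd)
    hence "N = mat (a i) ** Ai - X ** N" by (simp add: eq_diff_eq)
    hence "norm N \<le> norm (mat (a i) ** Ai) + norm (X ** N)"
      by (metis norm_triangle_ineq4)
    also have "\<dots> \<le> K + norm X * norm N"
      using bnd[of i] norm_mm[of X N] unfolding Ai_def by linarith
    also have "\<dots> \<le> K + 1/2 * norm N" using mult_right_mono[OF nX norm_ge_zero[of N]] by simp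
    finally show ?thesis unfolding N_def by linarith
  qed
  with invA' show ?thesis by blast
qed

lemma ess_sup_fin:
  assumes "ess_sup M (\<lambda>p. ereal (f p)) < \<infinity>"
  shows "\<exists>K. AE p in M. f p \<le> K"
proof -
  have "\<exists>c\<in>{c. AE p in M. ereal (f p) \<le> c}. c < \<infinity>"
    using assms unfolding ess_sup_def by (simp only: Inf_less_iff)
  then obtain c where c: "AE p in M. ereal (f p) \<le> c" "c < \<infinity>" by blast
  have "c \<le> ereal (real_of_ereal c)" using c(2) by (cases c) auto
  with c(1) have "AE p in M. f p \<le> real_of_ereal c"
    by (auto elim!: eventually_mono dest: order.trans)
  thus ?thesis by blast
qed

lemma ess_sup_bnd:
  assumes "AE p in M. f p \<le> K"
  shows "ess_sup M (\<lambda>p. ereal (f p)) < \<infinity>"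
proof -
  have "ess_sup M (\<lambda>p. ereal (f p)) \<le> ereal K"
    unfolding ess_sup_def using assms by (auto intro!: Inf_lower elim!: eventually_mono)
  moreover have "ereal K < \<infinity>" by simp
  ultimately show ?thesis by (rule le_less_trans)
qed

lemma pointwise_y:
  fixes a :: "'qa::finite \<Rightarrow> 'p \<Rightarrow> complex" and b :: "'qb::finite \<Rightarrow> 'p \<Rightarrow> complex"
    and g :: "'qc::finite \<Rightarrow> 'p \<Rightarrow> complex"
    and A :: "real^'r^'r^'qa" and B :: "real^'nf^'r^'qb" and C :: "real^'r^'no^'qc"
  assumes inv: "invertible (pcomb a A p)"
    and bnd: "\<forall>i. norm (mat (a i p) ** matrix_inv (pcomb a A p)) \<le> K"
  shows "0 < (\<Sum>i\<in>UNIV. cmod (a i p)) \<and>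
    norm (pcomb g C p ** matrix_inv (pcomb a A p) ** pcomb b B p)
      \<le> (norm C * norm B * real CARD('qa) * K) *
         ((\<Sum>j\<in>UNIV. cmod (b j p)) * (\<Sum>k\<in>UNIV. cmod (g k p)) / (\<Sum>i\<in>UNIV. cmod (a i p)))"
proof -
  define Sa where "Sa = (\<Sum>i\<in>UNIV. cmod (a i p))"
  define Sb where "Sb = (\<Sum>j\<in>UNIV. cmod (b j p))"
  define Sg where "Sg = (\<Sum>k\<in>UNIV. cmod (g k p))"
  define Ai where "Ai = matrix_inv (pcomb a A p)"
  have Sa0: "Sa \<ge> 0" unfolding Sa_def by (simp add: sum_nonneg)
  have "Sa \<noteq> 0"
  proof
    assume "Sa = 0"
    hence "\<forall>i. a i p = 0" unfolding Sa_def by (simp add: sum_nonneg_eq_0_iff)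
    hence "pcomb a A p = 0" by (simp add: pcomb_def vec_eq_iff)
    with inv not_inv0 show False by metis
  qed
  with Sa0 have Sapos: "Sa > 0" by simp
  have K0: "K \<ge> 0" using bnd norm_ge_zero order.trans by metis
  have "Sa * norm Ai = (\<Sum>i\<in>UNIV. norm (mat (a i p) ** Ai))"
    unfolding Sa_def norm_mat_mul by (simp add: sum_distrib_right)
  also have "\<dots> \<le> (\<Sum>i\<in>(UNIV::'qa set). K)"
    using bnd unfolding Ai_def by (intro sum_mono) auto
  finally have "Sa * norm Ai \<le> real CARD('qa) * K" by simp
  hence nAi: "norm Ai \<le> real CARD('qa) * K / Sa" using Sapos by (simp add: field_simps)
  have nC: "norm (pcomb g C p) \<le> Sg * norm C" unfolding Sg_def by (rule norm_pcomb)
  have nB: "norm (pcomb b B p) \<le> Sb * norm B" unfolding Sb_def by (rule norm_pcomb)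
  have "norm (pcomb g C p ** Ai ** pcomb b B p) \<le> norm (pcomb g C p ** Ai) * norm (pcomb b B p)"
    by (rule norm_mm)
  also have "\<dots> \<le> (norm (pcomb g C p) * norm Ai) * norm (pcomb b B p)"
    by (intro mult_right_mono norm_mm) auto
  also have "\<dots> \<le> ((Sg * norm C) * (real CARD('qa) * K / Sa)) * (Sb * norm B)"
    by (intro mult_mono nC nAi nB) (auto simp: Sg_def sum_nonneg K0 Sapos less_imp_le)
  also have "\<dots> = (norm C * norm B * real CARD('qa) * K) * (Sb * Sg / Sa)"
    by (simp add: field_simps)
  finally show ?thesis using Sapos unfolding Sa_def Sb_def Sg_def Ai_def by simp
qed

lemma ennr: "0 \<le> x \<Longrightarrow> 0 < y \<Longrightarrow> ennreal (c^2) * (ennreal x / ennreal y)^2 = ennreal ((c * (x / y))^2)"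
proof -
  assume x: "0 \<le> x" and y: "0 < y"
  have "ennreal x / ennreal y = ennreal (x / y)" using x y by (rule divide_ennreal)
  hence "(ennreal x / ennreal y)^2 = ennreal ((x/y)^2)" using x y by (simp add: ennreal_power)
  hence "ennreal (c^2) * (ennreal x / ennreal y)^2 = ennreal (c^2 * (x/y)^2)"
    using x y by (simp add: ennreal_mult)
  moreover have "c^2 * (x/y)^2 = (c * (x / y))^2" by (simp only: power_mult_distrib)
  ultimately show ?thesis by simp
qed

theorem lemma1:
  fixes M :: "(complex^'np) measure"
    and \<alpha> :: "'qa::finite \<Rightarrow> complex^'np \<Rightarrow> complex"
    and \<beta> :: "'qb::finite \<Rightarrow> complex^'np \<Rightarrow> complex"
    and \<gamma> :: "'qc::finite \<Rightarrow> complex^'np \<Rightarrow> complex"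
  assumes conj_space: "\<forall>p\<in>space M. conjv p \<in> space M"
    and conj_sets: "\<forall>S\<in>sets M. conjv ` S \<in> sets M"
    and conj_meas: "\<forall>S\<in>sets M. emeasure M (conjv ` S) = emeasure M S"
    and meas_\<alpha>: "\<forall>i. \<alpha> i \<in> borel_measurable M"
    and meas_\<beta>: "\<forall>j. \<beta> j \<in> borel_measurable M"
    and meas_\<gamma>: "\<forall>k. \<gamma> k \<in> borel_measurable M"
    and sym_\<alpha>: "\<forall>i. \<forall>p\<in>space M. \<alpha> i (conjv p) = cnj (\<alpha> i p)"
    and sym_\<beta>: "\<forall>j. \<forall>p\<in>space M. \<beta> j (conjv p) = cnj (\<beta> j p)"
    and sym_\<gamma>: "\<forall>k. \<forall>p\<in>space M. \<gamma> k (conjv p) = cnj (\<gamma> k p)"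
    and integ: "(\<integral>\<^sup>+ p. ((ennreal ((\<Sum>j\<in>UNIV. cmod (\<beta> j p)) * (\<Sum>k\<in>UNIV. cmod (\<gamma> k p)))
                    / ennreal (\<Sum>i\<in>UNIV. cmod (\<alpha> i p))) ^ 2) \<partial>M) < \<infinity>"
  defines "\<R> \<equiv> {(A :: real^'r^'r^'qa, B :: real^'nf^'r^'qb, C :: real^'r^'no^'qc).
                 (AE p in M. invertible (pcomb \<alpha> A p)) \<and>
                 (\<forall>i. ess_sup M (\<lambda>p. ereal (frob (mat (\<alpha> i p) ** matrix_inv (pcomb \<alpha> A p)))) < \<infinity>)}"
  shows "open \<R> \<and>
         (\<forall>(A, B, C)\<in>\<R>.
            (\<integral>\<^sup>+ p. ennreal ((frob (pcomb \<gamma> C p ** matrix_inv (pcomb \<alpha> A p) ** pcomb \<beta> B p))\<^sup>2) \<partial>M) < \<infinity>)"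
proof -
  define P where "P = (\<lambda>A::real^'r^'r^'qa. (AE p in M. invertible (pcomb \<alpha> A p)) \<and>
                 (\<forall>i. ess_sup M (\<lambda>p. ereal (frob (mat (\<alpha> i p) ** matrix_inv (pcomb \<alpha> A p)))) < \<infinity>))"
  have R_eq: "\<R> = {A. P A} \<times> (UNIV :: ((real^'nf^'r^'qb) \<times> (real^'r^'no^'qc)) set)"
    unfolding \<R>_def P_def by (auto simp only: mem_Times_iff mem_Collect_eq split: prod.splits)
  have bnd: "\<exists>K\<ge>0. AE p in M. invertible (pcomb \<alpha> A p) \<and>
               (\<forall>i. norm (mat (\<alpha> i p) ** matrix_inv (pcomb \<alpha> A p)) \<le> K)" if PA: "P A" for A
  proof -
    have "\<forall>i. \<exists>K. AE p in M. norm (mat (\<alpha> i p) ** matrix_inv (pcomb \<alpha> A p)) \<le> K"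
      using PA unfolding P_def frob_norm by (auto intro: ess_sup_fin)
    then obtain Kf where Kf: "\<And>i. AE p in M. norm (mat (\<alpha> i p) ** matrix_inv (pcomb \<alpha> A p)) \<le> Kf i"
      by (rule choice[THEN exE]) blast
    define K where "K = (\<Sum>i\<in>UNIV. \<bar>Kf i\<bar>)"
    have K0: "K \<ge> 0" unfolding K_def by (simp add: sum_nonneg)
    have Kle: "Kf i \<le> K" for i
    proof -
      have "\<bar>Kf i\<bar> \<le> K" unfolding K_def by (rule member_le_sum) auto
      thus ?thesis by simp
    qed
    have "AE p in M. \<forall>i\<in>UNIV. norm (mat (\<alpha> i p) ** matrix_inv (pcomb \<alpha> A p)) \<le> Kf i"
      by (rule AE_finite_allI) (auto intro: Kf)
    moreover have "AE p in M. invertible (pcomb \<alpha> A p)" using PA unfolding P_def by simp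
    ultimately have "AE p in M. invertible (pcomb \<alpha> A p) \<and>
               (\<forall>i. norm (mat (\<alpha> i p) ** matrix_inv (pcomb \<alpha> A p)) \<le> K)"
      proof eventually_elim
        case (elim p)
        thus ?case using Kle order.trans by blast
      qed
    with K0 show ?thesis by blast
  qed
  have "open {A. P A}"
    unfolding open_contains_ball
  proof
    fix A assume "A \<in> {A. P A}"
    then obtain K where K0: "K \<ge> 0" and KA: "AE p in M. invertible (pcomb \<alpha> A p) \<and>
               (\<forall>i. norm (mat (\<alpha> i p) ** matrix_inv (pcomb \<alpha> A p)) \<le> K)"
      using bnd by auto
    define d where "d = 1 / (2 * (real CARD('qa) * K + 1))"
    have "real CARD('qa) * K \<ge> 0" using K0 by simp
    hence dpos: "d > 0" unfolding d_def by simp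
    have "ball A d \<subseteq> {A. P A}"
    proof
      fix A' assume "A' \<in> ball A d"
      define E where "E = A' - A"
      have nE: "norm E < d" using \<open>A' \<in> ball A d\<close> unfolding E_def by (simp add: dist_norm norm_minus_commute)
      have "real CARD('qa) * K * norm E \<le> (real CARD('qa) * K + 1) * d"
        using nE K0 by (intro mult_mono) auto
      also have "\<dots> = 1/2" unfolding d_def using \<open>real CARD('qa) * K \<ge> 0\<close> by (simp add: field_simps)
      finally have small: "real CARD('qa) * K * norm E \<le> 1/2" .
      have A'eq: "pcomb \<alpha> A' p = pcomb \<alpha> A p + (\<Sum>i\<in>UNIV. mat (\<alpha> i p) ** cm (E$i))" for p
      proof -
        have "A' = A + E" unfolding E_def by simp
        hence "pcomb \<alpha> A' p = pcomb \<alpha> A p + pcomb \<alpha> E p" using pcomb_add by metis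
        thus ?thesis by (simp only: pcomb_sum[of \<alpha> E p])
      qed
      have "AE p in M. invertible (pcomb \<alpha> A' p) \<and>
               (\<forall>i. norm (mat (\<alpha> i p) ** matrix_inv (pcomb \<alpha> A' p)) \<le> 2 * K)"
        using KA
      proof eventually_elim
        case (elim p)
        show ?case unfolding A'eq
          by (rule pointwise_open[where K = K]) (use elim small in auto)
      qed
      hence h1: "AE p in M. invertible (pcomb \<alpha> A' p)"
        and h2: "\<And>i. AE p in M. norm (mat (\<alpha> i p) ** matrix_inv (pcomb \<alpha> A' p)) \<le> 2 * K"
        by (auto elim: eventually_mono)
      show "A' \<in> {A. P A}"
        unfolding P_def frob_norm using h1 ess_sup_bnd[OF h2] by simp
    qed
    with dpos show "\<exists>e>0. ball A e \<subseteq> {A. P A}" by blast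
  qed
  hence "open \<R>" unfolding R_eq by (intro open_Times) auto
  moreover have "(\<integral>\<^sup>+ p. ennreal ((frob (pcomb \<gamma> C p ** matrix_inv (pcomb \<alpha> A p) ** pcomb \<beta> B p))\<^sup>2) \<partial>M) < \<infinity>"
    if "(A, B, C) \<in> \<R>" for A B C
  proof -
    have "P A" using that unfolding R_eq by simp
    then obtain K where K0: "K \<ge> 0" and KA: "AE p in M. invertible (pcomb \<alpha> A p) \<and>
               (\<forall>i. norm (mat (\<alpha> i p) ** matrix_inv (pcomb \<alpha> A p)) \<le> K)"
      using bnd by auto
    define c where "c = norm C * norm B * real CARD('qa) * K"
    define f where "f = (\<lambda>p. ((ennreal ((\<Sum>j\<in>UNIV. cmod (\<beta> j p)) * (\<Sum>k\<in>UNIV. cmod (\<gamma> k p)))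
                    / ennreal (\<Sum>i\<in>UNIV. cmod (\<alpha> i p))) ^ 2))"
    have ma[measurable]: "\<alpha> i \<in> borel_measurable M" for i using meas_\<alpha> by simp
    have mb[measurable]: "\<beta> i \<in> borel_measurable M" for i using meas_\<beta> by simp
    have mg[measurable]: "\<gamma> i \<in> borel_measurable M" for i using meas_\<gamma> by simp
    have fm: "f \<in> borel_measurable M"
      unfolding f_def by measurable
    have "AE p in M. ennreal ((frob (pcomb \<gamma> C p ** matrix_inv (pcomb \<alpha> A p) ** pcomb \<beta> B p))\<^sup>2)
            \<le> ennreal (c^2) * f p"
      using KA
    proof eventually_elim
      case (elim p)
      define q where "q = (\<Sum>j\<in>UNIV. cmod (\<beta> j p)) * (\<Sum>k\<in>UNIV. cmod (\<gamma> k p)) / (\<Sum>i\<in>UNIV. cmod (\<alpha> i p))"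
      have pw: "0 < (\<Sum>i\<in>UNIV. cmod (\<alpha> i p))"
        "norm (pcomb \<gamma> C p ** matrix_inv (pcomb \<alpha> A p) ** pcomb \<beta> B p) \<le> c * q"
        using pointwise_y[of \<alpha> A p K \<gamma> C \<beta> B] elim unfolding c_def q_def by auto
      have q0: "q \<ge> 0" unfolding q_def by (simp add: sum_nonneg)
      have "(frob (pcomb \<gamma> C p ** matrix_inv (pcomb \<alpha> A p) ** pcomb \<beta> B p))\<^sup>2 \<le> (c * q)^2"
        unfolding frob_norm by (rule power_mono[OF pw(2) norm_ge_zero])
      moreover have "ennreal (c^2) * f p = ennreal ((c * q)^2)"
        unfolding f_def q_def using pw(1)
        by (intro ennr) (auto simp: sum_nonneg)
      ultimately show ?case by (simp add: ennreal_leI)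
    qed
    hence "(\<integral>\<^sup>+ p. ennreal ((frob (pcomb \<gamma> C p ** matrix_inv (pcomb \<alpha> A p) ** pcomb \<beta> B p))\<^sup>2) \<partial>M)
           \<le> (\<integral>\<^sup>+ p. ennreal (c^2) * f p \<partial>M)"
      by (rule nn_integral_mono_AE)
    also have "\<dots> = ennreal (c^2) * integral\<^sup>N M f" by (rule nn_integral_cmult[OF fm])
    also have "\<dots> < \<infinity>" using integ unfolding f_def[symmetric]
      by (simp add: ennreal_mult_less_top)
    finally show ?thesis .
  qed
  ultimately show ?thesis by auto
qed

end
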